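(* Fix $\alpha>1$, $R>0$, $T>1$ and $\beta,\delta,\mu>0$ with $K_{max}:=\min\big(\frac T4,\frac1{3\mu},\frac{3\beta}{2\mu}\big)>10$. For $\rho_r>0$ let $\Theta(\rho_r)=(\alpha,\rho_r,\beta\rho_r,\delta\rho_r,\mu\rho_r,T)$. Consider the set $I$ of $\rho_r>0$ satisfying $$\rho_r>\frac{\alpha}{2\delta},\qquad \rho_r>\frac{3\alpha}{4(1+\beta)^2R}g^2\Big(\frac{4R}{3K_{max}}\Big),\qquad \rho_r<\frac{\alpha}{(1+\beta)^2}\frac{g^2(R)}{R}.$$ Then on $I$, both $K'_{csi}(R,\Theta(\rho_r))$ and $M'_{csi}(R,\Theta(\rho_r))$ increase monotonically as $\rho_r$ decreases.
   Context: $g(x)=\sqrt{\frac{x}{2^x-1}}\big(2^x x\ln2-2^x+1\big)$, $x>0$. For $\Theta=(\alpha,\rho_r,\rho_d,\rho_s,\rho_0,T)$ and real $M>K\ge1$, $\frac{1}{\zeta_{csi}(M,K,R,\Theta)}=\frac1R\big[\frac{\alpha K}{M-K}(2^{R/K}-1)+M\rho_r+K\rho_d+\rho_s\big]$. $(M'_{csi}(R,\Theta),K'_{csi}(R,\Theta))$ denotes the maximizer (which exists and is unique) of $\zeta_{csi}(M,K,R,\Theta)$ over real $(M,K)$ with $1\le K\le\min\big(\frac T4,\frac{\rho_r}{3\rho_0},\frac{3\rho_d}{2\rho_0}\big)$, $M>K$. *)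

theory Defs
  imports Complex_Main
begin

definition g :: "real \<Rightarrow> real" where
  "g x = sqrt (x / (2 powr x - 1)) * (2 powr x * x * ln 2 - 2 powr x + 1)"

type_synonym params = "real \<times> real \<times> real \<times> real \<times> real \<times> real"

definition zeta_csi :: "real \<Rightarrow> real \<Rightarrow> real \<Rightarrow> params \<Rightarrow> real" where
  "zeta_csi M K R \<Theta> = (case \<Theta> of (\<alpha>, \<rho>r, \<rho>d, \<rho>s, \<rho>0, T) \<Rightarrow>
     1 / ((1 / R) * (\<alpha> * K / (M - K) * (2 powr (R / K) - 1) + M * \<rho>r + K * \<rho>d + \<rho>s)))"

definition feasible_csi :: "params \<Rightarrow> (real \<times> real) set" where
  "feasible_csi \<Theta> = (case \<Theta> of (\<alpha>, \<rho>r, \<rho>d, \<rho>s, \<rho>0, T) \<Rightarrow>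
     {(M, K). 1 \<le> K \<and> K \<le> min (T / 4) (min (\<rho>r / (3 * \<rho>0)) (3 * \<rho>d / (2 * \<rho>0))) \<and> M > K})"

definition opt_csi :: "real \<Rightarrow> params \<Rightarrow> real \<times> real" where
  "opt_csi R \<Theta> = (THE p. p \<in> feasible_csi \<Theta> \<and>
       (\<forall>q \<in> feasible_csi \<Theta>. zeta_csi (fst q) (snd q) R \<Theta> \<le> zeta_csi (fst p) (snd p) R \<Theta>))"

definition M'_csi :: "real \<Rightarrow> params \<Rightarrow> real" where "M'_csi R \<Theta> = fst (opt_csi R \<Theta>)"
definition K'_csi :: "real \<Rightarrow> params \<Rightarrow> real" where "K'_csi R \<Theta> = snd (opt_csi R \<Theta>)"

end

theory Submission
  imports Defs
begin

definition qf :: "real \<Rightarrow> real" where "qf u = u * exp u - exp u + 1"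
definition Wf :: "real \<Rightarrow> real" where "Wf u = (qf u)^2 / (exp u - 1)"
definition Pf :: "real \<Rightarrow> real" where "Pf u = u * qf u / (exp u - 1)"

lemma exp_strict: "u \<noteq> 0 \<Longrightarrow> 1 + u < exp (u::real)"
  by (smt (verit) exp_ge_add_one_self exp_minus_ge exp_eq_one_iff exp_gt_zero ln_eq_minus_one ln_exp)

lemma qf_pos: "u > 0 \<Longrightarrow> qf u > 0"
proof -
  assume u: "u > 0"
  have "1 - u < exp (-u)" using exp_strict[of "-u"] u by simp
  hence "exp u * (1 - u) < exp u * exp (-u)" by simp
  hence "exp u * (1 - u) < 1" by (simp add: exp_minus field_simps)
  thus ?thesis unfolding qf_def by (simp add: algebra_simps)
qed

lemma E_pos: "u > 0 \<Longrightarrow> exp u - 1 > (0::real)"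
  using exp_gt_one by simp

lemma Wf_pos: "u > 0 \<Longrightarrow> Wf u > 0"
  unfolding Wf_def using qf_pos[of u] E_pos[of u] by simp

lemma qf_deriv: "(qf has_real_derivative (u * exp u)) (at u)"
proof -
  have "((\<lambda>u. u * exp u - exp u + 1) has_real_derivative (1 * exp u + u * exp u - exp u)) (at u)"
    by (auto intro!: derivative_eq_intros)
  thus ?thesis unfolding qf_def[abs_def] by simp
qed

lemma Wf_deriv: "u > 0 \<Longrightarrow> (Wf has_real_derivative
   (qf u * exp u * (u * exp u - 2*u + exp u - 1) / (exp u - 1)^2)) (at u)"
proof -
  assume u: "u > 0"
  have E: "exp u - 1 \<noteq> 0" using E_pos[OF u] by simp
  have D: "((\<lambda>u. (qf u)^2 / (exp u - 1)) has_real_derivative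
     ((2 * qf u * (u * exp u)) * (exp u - 1) - (qf u)^2 * exp u) / (exp u - 1)^2) (at u)"
    using E by (auto intro!: derivative_eq_intros qf_deriv simp: power2_eq_square)
  have eq: "((2 * qf u * (u * exp u)) * (exp u - 1) - (qf u)^2 * exp u) / (exp u - 1)^2
     = qf u * exp u * (u * exp u - 2*u + exp u - 1) / (exp u - 1)^2"
    unfolding qf_def by (simp add: power2_eq_square algebra_simps)
  show ?thesis using D[unfolded eq] unfolding Wf_def[abs_def] .
qed

lemma Wf_mono: assumes "0 < a" "a < b" shows "Wf a < Wf b"
proof (rule DERIV_pos_imp_increasing[OF assms(2)])
  fix x assume x: "a \<le> x" "x \<le> b"
  hence x0: "x > 0" using assms by simp
  have "1 + x < exp x" using exp_strict[of x] x0 by simp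
  hence "(1+x)*(1+x) \<le> exp x * (1+x)" using x0 by (intro mult_right_mono) auto
  hence "x * exp x - 2*x + exp x - 1 > 0" using x0 by (simp add: algebra_simps) (smt (verit) mult_pos_pos x0)
  hence "qf x * exp x * (x * exp x - 2*x + exp x - 1) / (exp x - 1)^2 > 0"
    using qf_pos[OF x0] E_pos[OF x0] by (simp add: divide_pos_pos)
  thus "\<exists>y. (Wf has_real_derivative y) (at x) \<and> 0 < y" using Wf_deriv[OF x0] by blast
qed

definition f1 :: "real \<Rightarrow> real" where
  "f1 u = 2*u*exp u*(exp u - 1) - (exp u - 1)^2 - u^2 * exp u"

lemma f1_pos: assumes "u > 0" shows "f1 u > 0"
proof -
  have "f1 0 < f1 u"
  proof (rule DERIV_pos_imp_increasing_open[OF assms])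
    fix x :: real assume x: "0 < x" "x < u"
    have D: "(f1 has_real_derivative (x * exp x * (4*(exp x - 1) - x))) (at x)"
    proof -
      have "((\<lambda>u. 2*u*exp u*(exp u - 1) - (exp u - 1)^2 - u^2 * exp u) has_real_derivative
         ((2*1*exp x + 2*x*exp x)*(exp x - 1) + 2*x*exp x*exp x - 2*(exp x - 1)*exp x - (2*x*exp x + x^2*exp x))) (at x)"
        by (auto intro!: derivative_eq_intros simp: power2_eq_square; simp add: algebra_simps)
      moreover have "((2*1*exp x + 2*x*exp x)*(exp x - 1) + 2*x*exp x*exp x - 2*(exp x - 1)*exp x - (2*x*exp x + x^2*exp x))
          = x * exp x * (4*(exp x - 1) - x)" by (simp add: power2_eq_square algebra_simps)
      ultimately show ?thesis unfolding f1_def[abs_def] by simp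
    qed
    have "1 + x < exp x" using exp_strict[of x] x by simp
    hence "x * exp x * (4*(exp x - 1) - x) > 0" using x by simp
    thus "\<exists>y. (f1 has_real_derivative y) (at x) \<and> 0 < y" using D by blast
  next
    show "continuous_on {0..u} f1" unfolding f1_def by (intro continuous_intros)
  qed
  thus ?thesis by (simp add: f1_def)
qed

lemma Pf_pos: "u > 0 \<Longrightarrow> Pf u > 0"
  unfolding Pf_def using qf_pos[of u] E_pos[of u] by simp

lemma Pf_mono: assumes "0 < a" "a < b" shows "Pf a < Pf b"
proof (rule DERIV_pos_imp_increasing[OF assms(2)])
  fix x assume x: "a \<le> x" "x \<le> b"
  hence x0: "x > 0" using assms by simp
  have E: "exp x - 1 \<noteq> 0" using E_pos[OF x0] by simp
  have D: "((\<lambda>u. u * qf u / (exp u - 1)) has_real_derivative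
     ((1 * qf x + x * (x * exp x)) * (exp x - 1) - x * qf x * exp x) / (exp x - 1)^2) (at x)"
    using E by (auto intro!: derivative_eq_intros qf_deriv simp: power2_eq_square)
  have eq: "((1 * qf x + x * (x * exp x)) * (exp x - 1) - x * qf x * exp x) = f1 x"
    unfolding qf_def f1_def by (simp add: power2_eq_square algebra_simps)
  have "f1 x / (exp x - 1)^2 > 0" using f1_pos[OF x0] E by simp
  thus "\<exists>y. (Pf has_real_derivative y) (at x) \<and> 0 < y" using D[unfolded eq] unfolding Pf_def[abs_def] by blast
qed

lemma two_powr: "(2::real) powr x = exp (x * ln 2)"
  by (simp add: powr_def)

lemma g_eq: assumes "x > 0" shows "g x = sqrt (x * Wf (x * ln 2))"
proof -
  have u: "x * ln 2 > 0" using assms by simp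
  have q: "2 powr x * x * ln 2 - 2 powr x + 1 = qf (x * ln 2)"
    unfolding two_powr qf_def by (simp add: algebra_simps)
  have "g x = sqrt (x / (exp (x*ln 2) - 1)) * sqrt ((qf (x * ln 2))^2)"
    unfolding g_def q using qf_pos[OF u] by (simp add: two_powr)
  also have "\<dots> = sqrt (x * Wf (x * ln 2))"
    unfolding Wf_def real_sqrt_mult[symmetric] by (rule arg_cong[where f=sqrt]) (simp add: field_simps)
  finally show ?thesis .
qed

lemma g_nonneg: "x > 0 \<Longrightarrow> g x \<ge> 0"
  using g_eq[of x] Wf_pos[of "x*ln 2"] by simp

lemma g_sq: "x > 0 \<Longrightarrow> (g x)^2 = x * Wf (x * ln 2)"
  using g_eq[of x] Wf_pos[of "x * ln 2"] by simp

lemma g_mono: assumes "0 < x" "x < y" shows "g x < g y"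
proof -
  have "Wf (x * ln 2) < Wf (y * ln 2)" using assms by (intro Wf_mono) auto
  moreover have "Wf (x * ln 2) > 0" using assms by (intro Wf_pos) auto
  ultimately have "x * Wf (x * ln 2) < y * Wf (y * ln 2)" using assms
    by (intro mult_strict_mono) auto
  thus ?thesis using g_eq assms by simp
qed

lemma g_scale: assumes "x > 0" shows "4/3 * (g x)^2 \<le> (g (4*x/3))^2"
proof -
  have "Wf (x * ln 2) \<le> Wf (4*x/3 * ln 2)" using assms
    by (intro less_imp_le Wf_mono) auto
  hence "4/3 * (x * Wf (x * ln 2)) \<le> (4*x/3) * Wf (4*x/3 * ln 2)" using assms
    by (simp add: mult_left_mono)
  thus ?thesis using g_sq assms by simp
qed

lemma g_cont: assumes "a > 0" "R > 0" shows "continuous_on {a..b} (\<lambda>K. g (R / K))"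
proof -
  have "continuous_on {a..b} (\<lambda>K. sqrt (R/K * ((R/K*ln 2) * exp (R/K*ln 2) - exp (R/K*ln 2) + 1)^2 / (exp (R/K*ln 2) - 1)))"
  proof -
    have E: "\<And>K. K \<in> {a..b} \<Longrightarrow> exp (R/K*ln 2) - 1 \<noteq> 0 \<and> K \<noteq> 0"
    proof -
      fix K assume "K \<in> {a..b}"
      hence K: "K > 0" using assms by auto
      thus "exp (R/K*ln 2) - 1 \<noteq> 0 \<and> K \<noteq> 0" using E_pos[of "R/K*ln 2"] K assms by simp
    qed
    show ?thesis using E by (intro continuous_intros) auto
  qed
  moreover have "\<And>K. K \<in> {a..b} \<Longrightarrow> g (R/K) = sqrt (R/K * ((R/K*ln 2) * exp (R/K*ln 2) - exp (R/K*ln 2) + 1)^2 / (exp (R/K*ln 2) - 1))"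
    using assms by (subst g_eq) (auto simp: Wf_def qf_def)
  ultimately show ?thesis using continuous_on_cong by (smt (verit, ccfv_SIG))
qed

lemma hh_deriv: assumes "K > 0"
  shows "((\<lambda>K. K * (exp (R/K*ln 2) - 1)) has_real_derivative (- qf (R/K*ln 2))) (at K)"
  using assms
  by (auto intro!: derivative_eq_intros simp: qf_def; simp add: field_simps power2_eq_square)

lemma g_R_K: assumes "K > 0" "R > 0"
  shows "g (R/K) = sqrt R * qf (R/K*ln 2) / sqrt (K * (exp (R/K*ln 2) - 1))"
proof -
  have u: "R/K*ln 2 > 0" using assms by simp
  have E: "exp (R/K*ln 2) - 1 > 0" using E_pos[OF u] .
  have q: "qf (R/K*ln 2) > 0" using qf_pos[OF u] .
  have "g (R/K) = sqrt (R * (qf (R/K*ln 2))^2 / (K * (exp (R/K*ln 2) - 1)))"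
    using assms by (subst g_eq) (auto simp: Wf_def field_simps)
  also have "\<dots> = sqrt R * qf (R/K*ln 2) / sqrt (K * (exp (R/K*ln 2) - 1))"
    using q by (simp add: real_sqrt_mult real_sqrt_divide)
  finally show ?thesis .
qed

lemma sh_deriv: assumes "K > 0" "R > 0"
  shows "((\<lambda>K. sqrt (K * (exp (R/K*ln 2) - 1))) has_real_derivative (- g (R/K) / (2 * sqrt R))) (at K)"
proof -
  have u: "R/K*ln 2 > 0" using assms by simp
  have E: "exp (R/K*ln 2) - 1 > 0" using E_pos[OF u] .
  have h: "K * (exp (R/K*ln 2) - 1) > 0" using E assms by simp
  have D: "((\<lambda>K. sqrt (K * (exp (R/K*ln 2) - 1))) has_real_derivative
     (inverse (sqrt (K * (exp (R/K*ln 2) - 1))) / 2 * (- qf (R/K*ln 2)))) (at K)"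
    by (rule DERIV_chain2[OF DERIV_real_sqrt[OF h] hh_deriv[OF assms(1)]])
  have "inverse (sqrt (K * (exp (R/K*ln 2) - 1))) / 2 * (- qf (R/K*ln 2)) = - g (R/K) / (2 * sqrt R)"
    using assms h unfolding g_R_K[OF assms] by (simp add: field_simps)
  thus ?thesis using D by (simp add: mult.commute)
qed

lemma opt_char:
  fixes \<alpha> R \<beta> \<delta> \<mu> T Kmax \<rho> c :: real
  assumes a: "\<alpha> > 0" and R: "R > 0" and b: "\<beta> > 0" and d: "\<delta> > 0" and m: "\<mu> > 0" and r: "\<rho> > 0"
    and Kmax: "Kmax = min (T/4) (min (1/(3*\<mu>)) (3*\<beta>/(2*\<mu>)))" and K1: "Kmax > 1"
    and c: "c = (1+\<beta>) * sqrt (\<rho>*R/\<alpha>)"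
    and up: "c < g R" and low: "g (R/Kmax) < c"
  obtains K0 where "1 < K0" "K0 < Kmax" "g (R/K0) = c"
    "opt_csi R (\<alpha>, \<rho>, \<beta>*\<rho>, \<delta>*\<rho>, \<mu>*\<rho>, T) = (K0 + sqrt (\<alpha>/\<rho>) * sqrt (K0 * (exp (R/K0*ln 2) - 1)), K0)"
    "sqrt (\<alpha>/\<rho>) * sqrt (K0 * (exp (R/K0*ln 2) - 1)) = (1+\<beta>)*R*ln 2 / Pf (R/K0*ln 2)"
proof -
  define hh where "hh K = K * (exp (R/K*ln 2) - 1)" for K
  define sa where "sa = sqrt (\<alpha>/\<rho>)"
  define F where "F K = 2*\<rho>*sa*sqrt (hh K) + \<rho>*(1+\<beta>)*K" for K
  define kk where "kk = \<rho>*sa/sqrt R"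
  have sa: "sa > 0" using a r by (simp add: sa_def)
  have kk: "kk > 0" using sa r R by (simp add: kk_def)
  have sac: "sa * c = (1+\<beta>) * sqrt R"
  proof -
    have "sa * c = (1+\<beta>) * sqrt (\<alpha>/\<rho> * (\<rho>*R/\<alpha>))" unfolding sa_def c real_sqrt_mult by simp
    also have "\<alpha>/\<rho> * (\<rho>*R/\<alpha>) = R" using a r by (simp add: field_simps)
    finally show ?thesis .
  qed
  have Fder: "(F has_real_derivative (kk * (c - g (R/K)))) (at K)" if K: "K > 0" for K
  proof -
    have D: "(F has_real_derivative (2*\<rho>*sa*(- g (R/K) / (2 * sqrt R)) + \<rho>*(1+\<beta>)*1)) (at K)"
      unfolding F_def[abs_def] hh_def
      by (rule DERIV_add[OF DERIV_cmult[OF sh_deriv[OF K R]] DERIV_cmult[OF DERIV_ident]])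
    have "2*\<rho>*sa*(- g (R/K) / (2 * sqrt R)) + \<rho>*(1+\<beta>)*1 = kk * (c - g (R/K))"
    proof -
      have "kk * c = \<rho>*(sa*c)/sqrt R" by (simp add: kk_def)
      also have "\<dots> = \<rho>*(1+\<beta>)" using sac R by simp
      finally have "kk * c = \<rho>*(1+\<beta>)" .
      thus ?thesis unfolding kk_def using R by (simp add: field_simps)
    qed
    thus ?thesis using D by simp
  qed
  have Fcont: "continuous_on {x..y} F" if "x > 0" for x y
  proof (rule DERIV_atLeastAtMost_imp_continuous_on)
    fix z assume "x \<le> z" "z \<le> y"
    hence "z > 0" using that by simp
    thus "\<exists>y. (F has_real_derivative y) (at z)" using Fder by blast
  qed
  obtain K0 where K0: "1 \<le> K0" "K0 \<le> Kmax" "g (R/K0) = c"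
    using IVT2'[of "\<lambda>K. g (R/K)" Kmax c 1] low up K1 g_cont[of 1 R Kmax] R by auto
  have K0': "1 < K0" "K0 < Kmax" using K0 up low by (auto simp: le_less)
  have K0p: "K0 > 0" using K0' by simp
  have Fmin: "F K0 < F K" if K: "1 \<le> K" "K \<le> Kmax" "K \<noteq> K0" for K
  proof (cases "K < K0")
    case True
    show ?thesis
    proof (rule DERIV_neg_imp_decreasing_open[OF True])
      fix x assume x: "K < x" "x < K0"
      hence "R/K0 < R/x" using R K by (simp add: divide_strict_left_mono)
      hence "g (R/K0) < g (R/x)" using R K0p by (intro g_mono) auto
      hence "kk * (c - g (R/x)) < 0" using kk K0 by (simp add: mult_pos_neg)
      thus "\<exists>y. (F has_real_derivative y) (at x) \<and> y < 0" using Fder[of x] x K by auto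
    next
      show "continuous_on {K..K0} F" using Fcont K by simp
    qed
  next
    case False
    hence KK: "K0 < K" using K by simp
    show ?thesis
    proof (rule DERIV_pos_imp_increasing_open[OF KK])
      fix x assume x: "K0 < x" "x < K"
      hence "R/x < R/K0" using R K0p by (simp add: divide_strict_left_mono)
      hence "g (R/x) < g (R/K0)" using R K0p x by (intro g_mono) auto
      hence "kk * (c - g (R/x)) > 0" using kk K0 by simp
      thus "\<exists>y. (F has_real_derivative y) (at x) \<and> y > 0" using Fder[of x] x K0p by auto
    next
      show "continuous_on {K0..K} F" using Fcont K0p by simp
    qed
  qed
  let ?Th = "(\<alpha>, \<rho>, \<beta>*\<rho>, \<delta>*\<rho>, \<mu>*\<rho>, T)"
  have feas: "feasible_csi ?Th = {(M, K). 1 \<le> K \<and> K \<le> Kmax \<and> M > K}"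
  proof -
    have "\<rho> / (3 * (\<mu> * \<rho>)) = 1/(3*\<mu>)" "3 * (\<beta> * \<rho>) / (2 * (\<mu> * \<rho>)) = 3*\<beta>/(2*\<mu>)"
      using r by (auto simp: field_simps)
    thus ?thesis unfolding feasible_csi_def Kmax by simp
  qed
  define S where "S M K = \<alpha> * K / (M - K) * (2 powr (R / K) - 1) + M * \<rho> + K * (\<beta> * \<rho>) + \<delta> * \<rho>" for M K
  have zeta: "zeta_csi M K R ?Th = R / S M K" for M K
    unfolding zeta_csi_def S_def by simp
  define s where "s K = sa * sqrt (hh K)" for K
  have Sdec: "S M K = \<rho> * (s K - (M - K))^2 / (M - K) + F K + \<delta>*\<rho>" if MK: "1 \<le> K" "K < M" for M K
  proof -
    have hp: "hh K > 0" unfolding hh_def using E_pos[of "R/K*ln 2"] MK R by simp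
    have s2: "\<alpha> * hh K = \<rho> * (s K)^2" unfolding s_def sa_def using hp a r
      by (simp add: power_mult_distrib)
    have "\<alpha> * K / (M - K) * (2 powr (R / K) - 1) = \<alpha> * hh K / (M - K)"
      unfolding hh_def two_powr by (simp add: field_simps)
    also have "\<dots> = \<rho> * (s K)^2 / (M - K)" using s2 by simp
    finally have e: "\<alpha> * K / (M - K) * (2 powr (R / K) - 1) = \<rho> * (s K)^2 / (M - K)" .
    have N: "M - K \<noteq> 0" using MK by simp
    have sq: "\<rho> * (s K - (M - K))^2 / (M - K) = \<rho> * (s K)^2 / (M - K) - 2*\<rho>*s K + \<rho>*(M-K)"
      using N by (simp add: field_simps power2_eq_square)
    have F: "F K = 2*\<rho>*s K + \<rho>*(1+\<beta>)*K" unfolding F_def s_def by simp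
    show ?thesis unfolding S_def e F sq by (simp add: algebra_simps)
  qed
  define p0 where "p0 = (K0 + s K0, K0)"
  have sK0: "s K0 > 0" unfolding s_def hh_def using sa E_pos[of "R/K0*ln 2"] K0p R by simp
  have p0f: "p0 \<in> feasible_csi ?Th" unfolding feas p0_def using K0 sK0 by simp
  have Sp0: "S (fst p0) (snd p0) = F K0 + \<delta>*\<rho>" unfolding p0_def using Sdec[of K0 "K0 + s K0"] K0 sK0 by simp
  have Spos: "S M K > 0" if "1 \<le> K" "K < M" for M K
  proof -
    have "\<alpha> * K / (M - K) * (2 powr (R / K) - 1) > 0"
      using that a R E_pos[of "R/K*ln 2"] by (simp add: two_powr)
    thus ?thesis unfolding S_def using that r b d by (simp add: add_pos_pos)
  qed
  have better: "zeta_csi (fst q) (snd q) R ?Th < zeta_csi (fst p0) (snd p0) R ?Th"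
    if q: "q \<in> feasible_csi ?Th" "q \<noteq> p0" for q
  proof -
    obtain M K where qq: "q = (M, K)" by fastforce
    have MK: "1 \<le> K" "K \<le> Kmax" "K < M" using q unfolding feas qq by auto
    have "S M K > F K0 + \<delta>*\<rho>"
    proof (cases "K = K0")
      case True
      hence "M \<noteq> K0 + s K0" using q qq p0_def by auto
      hence "s K - (M - K) \<noteq> 0" using True by simp
      hence "\<rho> * (s K - (M - K))^2 / (M - K) > 0" using r MK by simp
      thus ?thesis using Sdec[OF MK(1) MK(3)] True by simp
    next
      case False
      have "\<rho> * (s K - (M - K))^2 / (M - K) \<ge> 0" using r MK by simp
      thus ?thesis using Sdec[OF MK(1) MK(3)] Fmin[OF MK(1,2) False] by simp
    qed
    hence "R / S M K < R / (F K0 + \<delta>*\<rho>)"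
      using Spos[OF MK(1) MK(3)] R Spos[of K0 "K0 + s K0"] Sp0 K0 sK0 p0_def
      by (intro divide_strict_left_mono) auto
    thus ?thesis unfolding zeta qq Sp0[symmetric] by simp
  qed
  have opt: "opt_csi R ?Th = p0"
    unfolding opt_csi_def
  proof (rule the_equality)
    show "p0 \<in> feasible_csi ?Th \<and> (\<forall>q\<in>feasible_csi ?Th. zeta_csi (fst q) (snd q) R ?Th \<le> zeta_csi (fst p0) (snd p0) R ?Th)"
      using p0f better by (metis order.order_iff_strict)
  next
    fix p assume p: "p \<in> feasible_csi ?Th \<and> (\<forall>q\<in>feasible_csi ?Th. zeta_csi (fst q) (snd q) R ?Th \<le> zeta_csi (fst p) (snd p) R ?Th)"
    show "p = p0"
    proof (rule ccontr)
      assume "p \<noteq> p0"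
      hence "zeta_csi (fst p) (snd p) R ?Th < zeta_csi (fst p0) (snd p0) R ?Th" using better p by blast
      thus False using p p0f by fastforce
    qed
  qed
  have Mid: "s K0 = (1+\<beta>)*R*ln 2 / Pf (R/K0*ln 2)"
  proof -
    have hp: "hh K0 > 0" unfolding hh_def using E_pos[of "R/K0*ln 2"] K0p R by simp
    have qp: "qf (R/K0*ln 2) > 0" using qf_pos K0p R by simp
    have gg: "g (R/K0) = sqrt R * qf (R/K0*ln 2) / sqrt (hh K0)" unfolding hh_def by (rule g_R_K[OF K0p R])
    have "sa * (sqrt R * qf (R/K0*ln 2) / sqrt (hh K0)) = (1+\<beta>) * sqrt R" using sac K0(3) gg by simp
    hence "(sa * qf (R/K0*ln 2)) * sqrt R = ((1+\<beta>) * sqrt (hh K0)) * sqrt R" using hp by (simp add: field_simps)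
    hence "sa * qf (R/K0*ln 2) = (1+\<beta>) * sqrt (hh K0)" using R by simp
    hence sa2: "sa = (1+\<beta>) * sqrt (hh K0) / qf (R/K0*ln 2)" using qp by (simp add: field_simps)
    have "s K0 = (1+\<beta>) * hh K0 / qf (R/K0*ln 2)" unfolding s_def sa2 using hp by simp
    also have "\<dots> = (1+\<beta>)*R*ln 2 / Pf (R/K0*ln 2)"
      unfolding hh_def Pf_def using K0p R qp E_pos[of "R/K0*ln 2"] by (simp add: field_simps)
    finally show ?thesis .
  qed
  show ?thesis
    apply (rule that[OF K0' K0(3)])
    using opt Mid unfolding p0_def s_def sa_def hh_def by auto
qed

theorem theorem6:
  fixes \<alpha> R T \<beta> \<delta> \<mu> Kmax :: real
  assumes "\<alpha> > 1" "R > 0" "T > 1" "\<beta> > 0" "\<delta> > 0" "\<mu> > 0"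
    and Kmax_def: "Kmax = min (T / 4) (min (1 / (3 * \<mu>)) (3 * \<beta> / (2 * \<mu>)))"
    and "Kmax > 10"
  defines "\<Theta> \<equiv> (\<lambda>\<rho>r::real. (\<alpha>, \<rho>r, \<beta> * \<rho>r, \<delta> * \<rho>r, \<mu> * \<rho>r, T))"
    and "I \<equiv> {\<rho>r::real. \<rho>r > 0 \<and> \<rho>r > \<alpha> / (2 * \<delta>)
              \<and> \<rho>r > 3 * \<alpha> / (4 * (1 + \<beta>)^2 * R) * (g (4 * R / (3 * Kmax)))^2
              \<and> \<rho>r < \<alpha> / (1 + \<beta>)^2 * (g R)^2 / R}"
  shows "\<forall>\<rho>1 \<in> I. \<forall>\<rho>2 \<in> I. \<rho>1 < \<rho>2 \<longrightarrow>
           K'_csi R (\<Theta> \<rho>2) \<le> K'_csi R (\<Theta> \<rho>1) \<and> M'_csi R (\<Theta> \<rho>2) \<le> M'_csi R (\<Theta> \<rho>1)"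
proof -
  have a: "\<alpha> > 0" and R: "R > 0" and b: "\<beta> > 0" and d: "\<delta> > 0" and m: "\<mu> > 0"
    using assms by auto
  have K1: "Kmax > 1" using assms(8) by simp
  define cc where "cc \<rho> = (1+\<beta>) * sqrt (\<rho>*R/\<alpha>)" for \<rho>
  have cc2: "(cc \<rho>)^2 = (1+\<beta>)^2 * (\<rho>*R/\<alpha>)" if "\<rho> > 0" for \<rho>
    unfolding cc_def using that a R by (simp add: power_mult_distrib)
  have cc0: "cc \<rho> \<ge> 0" if "\<rho> > 0" for \<rho> unfolding cc_def using that a R b by simp
  have key: "\<exists>K0. 1 < K0 \<and> K0 < Kmax \<and> g (R/K0) = cc \<rho> \<and> K'_csi R (\<Theta> \<rho>) = K0
      \<and> M'_csi R (\<Theta> \<rho>) = K0 + (1+\<beta>)*R*ln 2 / Pf (R/K0*ln 2)" if rI: "\<rho> \<in> I" for \<rho>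
  proof -
    have r: "\<rho> > 0" and lowI: "\<rho> > 3 * \<alpha> / (4 * (1 + \<beta>)^2 * R) * (g (4 * R / (3 * Kmax)))^2"
      and upI: "\<rho> < \<alpha> / (1 + \<beta>)^2 * (g R)^2 / R" using rI unfolding I_def by auto
    have bb: "(1+\<beta>)^2 > 0" using b by simp
    have "(cc \<rho>)^2 < (g R)^2"
    proof -
      have "\<rho> * ((1+\<beta>)^2 * R) < \<alpha> * (g R)^2" using upI bb R by (simp add: field_simps)
      thus ?thesis unfolding cc2[OF r] using a by (simp add: field_simps)
    qed
    hence up: "cc \<rho> < g R" using g_nonneg[OF R] by (rule power2_less_imp_less)
    have "(g (R/Kmax))^2 < (cc \<rho>)^2"
    proof -
      have x: "R/Kmax > 0" using R K1 by simp
      have e: "4 * (R/Kmax) / 3 = 4 * R / (3 * Kmax)" by simp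
      have s: "4/3 * (g (R/Kmax))^2 \<le> (g (4 * R / (3 * Kmax)))^2" using g_scale[OF x] unfolding e .
      have "3 * \<alpha> * (g (4 * R / (3 * Kmax)))^2 < \<rho> * (4 * (1 + \<beta>)^2 * R)"
        using lowI bb R by (simp add: field_simps)
      hence "3 * \<alpha> * (4/3 * (g (R/Kmax))^2) < \<rho> * (4 * (1 + \<beta>)^2 * R)"
        using s a by (smt (verit) mult_left_mono)
      thus ?thesis unfolding cc2[OF r] using a by (simp add: field_simps)
    qed
    hence low: "g (R/Kmax) < cc \<rho>" using cc0[OF r] by (rule power2_less_imp_less)
    obtain K0 where K0: "1 < K0" "K0 < Kmax" "g (R/K0) = cc \<rho>"
      "opt_csi R (\<alpha>, \<rho>, \<beta>*\<rho>, \<delta>*\<rho>, \<mu>*\<rho>, T) = (K0 + sqrt (\<alpha>/\<rho>) * sqrt (K0 * (exp (R/K0*ln 2) - 1)), K0)"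
      "sqrt (\<alpha>/\<rho>) * sqrt (K0 * (exp (R/K0*ln 2) - 1)) = (1+\<beta>)*R*ln 2 / Pf (R/K0*ln 2)"
      by (rule opt_char[OF a R b d m r Kmax_def K1 cc_def up low])
    show ?thesis
      apply (rule exI[of _ K0])
      using K0 unfolding K'_csi_def M'_csi_def \<Theta>_def by simp
  qed
  show ?thesis
  proof (intro ballI impI)
    fix \<rho>1 \<rho>2 assume r1: "\<rho>1 \<in> I" and r2: "\<rho>2 \<in> I" and lt: "\<rho>1 < \<rho>2"
    have p1: "\<rho>1 > 0" using r1 unfolding I_def by simp
    obtain K1' where k1: "1 < K1'" "g (R/K1') = cc \<rho>1" "K'_csi R (\<Theta> \<rho>1) = K1'"
      "M'_csi R (\<Theta> \<rho>1) = K1' + (1+\<beta>)*R*ln 2 / Pf (R/K1'*ln 2)" using key[OF r1] by blast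
    obtain K2' where k2: "1 < K2'" "g (R/K2') = cc \<rho>2" "K'_csi R (\<Theta> \<rho>2) = K2'"
      "M'_csi R (\<Theta> \<rho>2) = K2' + (1+\<beta>)*R*ln 2 / Pf (R/K2'*ln 2)" using key[OF r2] by blast
    have "\<rho>1*R/\<alpha> < \<rho>2*R/\<alpha>" using lt R a by (simp add: divide_strict_right_mono)
    hence "cc \<rho>1 < cc \<rho>2" unfolding cc_def using b by simp
    hence gl: "g (R/K1') < g (R/K2')" using k1 k2 by simp
    have xl: "R/K1' < R/K2'"
    proof (rule ccontr)
      assume "\<not> R/K1' < R/K2'"
      hence "R/K2' \<le> R/K1'" by simp
      moreover have "R/K2' > 0" using R k2 by simp
      ultimately have "g (R/K2') \<le> g (R/K1')" using g_mono by (metis order.order_iff_strict)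
      thus False using gl by simp
    qed
    hence "R * K2' < R * K1'" using k1 k2 by (simp add: field_simps)
    hence Kle: "K2' < K1'" using R by simp
    have pos2: "R/K2'*ln 2 > 0" and pos1: "R/K1'*ln 2 > 0" using R k1 k2 by auto
    have "R/K1'*ln 2 < R/K2'*ln 2" using xl by (intro mult_strict_right_mono) auto
    hence "Pf (R/K1'*ln 2) < Pf (R/K2'*ln 2)" using pos1 by (intro Pf_mono)
    hence "(1+\<beta>)*R*ln 2 / Pf (R/K2'*ln 2) \<le> (1+\<beta>)*R*ln 2 / Pf (R/K1'*ln 2)"
      using Pf_pos[OF pos1] R b by (intro divide_left_mono) auto
    thus "K'_csi R (\<Theta> \<rho>2) \<le> K'_csi R (\<Theta> \<rho>1) \<and> M'_csi R (\<Theta> \<rho>2) \<le> M'_csi R (\<Theta> \<rho>1)"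
      using k1 k2 Kle by simp
  qed
qed

end
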